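(* Let $k\ge1$ and let $f:\mathbb{N}^k\to\mathbb{N}$ be minimal. Let $B\subseteq\mathbb{N}$ satisfy $\bar d(B)=0$ and $\bar d(f[B^k])>0$. Then for each $i\ge0$ the set $B\setminus[0,i]$ also satisfies $\bar d(B\setminus[0,i])=0$ and $\bar d(f[(B\setminus[0,i])^k])>0$; in fact $\bar d(f[(B\setminus[0,i])^k])=\bar d(f[B^k])$.
   Context: $\mathbb{N}=\{0,1,2,\dots\}$. For $A\subseteq\mathbb{N}$, $\bar d(A)=\limsup_{n\to\infty}\frac{|A\cap[0,n)|}{n}$. $\mathscr{C}_{I_{\bar d=0}}$ is the set of all finitary functions $f:\mathbb{N}^k\to\mathbb{N}$ ($k\ge1$) such that $\bar d(f[A^k])=0$ whenever $\bar d(A)=0$. For $f:\mathbb{N}^k\to\mathbb{N}$, a permutation $\pi$ of $\{1,\dots,k\}$ and a tuple $\bar a=(a_1,\dots,a_\ell)\in\mathbb{N}^\ell$ with $0\le\ell<k$, the shadow $f_{\pi,\bar a}$ is the $(k-\ell)$-ary function $f_{\pi,\bar a}(y_1,\dots,y_{k-\ell})=f_\pi(a_1,\dots,a_\ell,y_1,\dots,y_{k-\ell})$, where $f_\pi(x_1,\dots,x_k)=f(x_{\pi(1)},\dots,x_{\pi(k)})$. The shadow is proper if $\ell>0$. $f$ is called minimal if $f\notin\mathscr{C}_{I_{\bar d=0}}$ and every proper shadow of $f$ lies in $\mathscr{C}_{I_{\bar d=0}}$. *)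

theory Defs
  imports "HOL-Analysis.Analysis" "HOL-Combinatorics.Permutations"
begin

definition upper_density :: "nat set \<Rightarrow> ereal" where
  "upper_density A = limsup (\<lambda>n. ereal (real (card (A \<inter> {..<n})) / real n))"

text \<open>A k-ary function N^k \<rightarrow> N is represented as a function on lists,
  only its values on lists of length k matter.  f[A^k]:\<close>
definition img_pow :: "nat \<Rightarrow> (nat list \<Rightarrow> nat) \<Rightarrow> nat set \<Rightarrow> nat set" where
  "img_pow k f A = {f xs | xs. length xs = k \<and> set xs \<subseteq> A}"

definition in_C_dzero :: "nat \<Rightarrow> (nat list \<Rightarrow> nat) \<Rightarrow> bool" where
  "in_C_dzero k f \<longleftrightarrow> k \<ge> 1 \<and>
     (\<forall>A. upper_density A = 0 \<longrightarrow> upper_density (img_pow k f A) = 0)"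

text \<open>f_pi(x_1..x_k) = f(x_{pi 1},..,x_{pi k}) (0-indexed here), shadow fixes the
  first length(as) arguments of f_pi to as.\<close>
definition permute_args :: "nat \<Rightarrow> (nat \<Rightarrow> nat) \<Rightarrow> (nat list \<Rightarrow> nat) \<Rightarrow> nat list \<Rightarrow> nat" where
  "permute_args k \<pi> f xs = f (map (\<lambda>i. xs ! \<pi> i) [0..<k])"

definition shadow :: "nat \<Rightarrow> (nat list \<Rightarrow> nat) \<Rightarrow> (nat \<Rightarrow> nat) \<Rightarrow> nat list \<Rightarrow> nat list \<Rightarrow> nat" where
  "shadow k f \<pi> as ys = permute_args k \<pi> f (as @ ys)"

definition minimal_fun :: "nat \<Rightarrow> (nat list \<Rightarrow> nat) \<Rightarrow> bool" where
  "minimal_fun k f \<longleftrightarrow> \<not> in_C_dzero k f \<and>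
     (\<forall>\<pi> as. \<pi> permutes {..<k} \<and> 0 < length as \<and> length as < k \<longrightarrow>
        in_C_dzero (k - length as) (shadow k f \<pi> as))"

end

theory Submission
  imports Defs
begin

lemma ud_mono: "A \<subseteq> C \<Longrightarrow> upper_density A \<le> upper_density C"
  unfolding upper_density_def
  apply (rule Limsup_mono)
  apply (rule always_eventually)
  apply (auto intro!: divide_right_mono card_mono)
  done

lemma ud_nonneg: "0 \<le> upper_density A"
  unfolding upper_density_def
  by (rule le_Limsup) auto

lemma ud_union: "upper_density (A \<union> C) \<le> upper_density A + upper_density C"
proof -
  have "upper_density (A \<union> C) \<le> limsup (\<lambda>n. ereal (real (card (A \<inter> {..<n})) / real n) + ereal (real (card (C \<inter> {..<n})) / real n))"
    unfolding upper_density_def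
  proof (rule Limsup_mono, rule always_eventually, rule allI)
    fix n
    have "card ((A \<union> C) \<inter> {..<n}) \<le> card (A \<inter> {..<n}) + card (C \<inter> {..<n})"
      by (metis Int_Un_distrib2 card_Un_le)
    hence "real (card ((A \<union> C) \<inter> {..<n})) / real n \<le> real (card (A \<inter> {..<n})) / real n + real (card (C \<inter> {..<n})) / real n"
      by (simp add: add_divide_distrib[symmetric] divide_right_mono)
    thus "ereal (real (card ((A \<union> C) \<inter> {..<n})) / real n) \<le> ereal (real (card (A \<inter> {..<n})) / real n) + ereal (real (card (C \<inter> {..<n})) / real n)"
      by simp
  qed
  also have "\<dots> \<le> upper_density A + upper_density C"
    unfolding upper_density_def by (rule ereal_limsup_add_mono)
  finally show ?thesis .
qed

lemma ud_union0: "upper_density C = 0 \<Longrightarrow> upper_density (A \<union> C) = upper_density A"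
  using ud_union[of A C] ud_mono[of A "A \<union> C"] by (simp add: order_antisym)

lemma ud_Union0: "finite I \<Longrightarrow> (\<And>x. x \<in> I \<Longrightarrow> upper_density (S x) = 0) \<Longrightarrow> upper_density (\<Union>x\<in>I. S x) = 0"
proof (induction I rule: finite_induct)
  case empty
  then show ?case
    by (simp add: upper_density_def Limsup_const zero_ereal_def[symmetric])
next
  case (insert x F)
  then show ?case using ud_union0[of "\<Union>x\<in>F. S x" "S x"] by (simp add: Un_commute)
qed

lemma ud_single: "upper_density {a} = 0"
proof -
  have "upper_density {a} \<le> limsup (\<lambda>n. ereal (1 / real n))"
    unfolding upper_density_def
  proof (rule Limsup_mono, rule always_eventually, rule allI)
    fix n
    have "card ({a} \<inter> {..<n}) \<le> 1" by (simp add: card_le_Suc0_iff_eq)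
    thus "ereal (real (card ({a} \<inter> {..<n})) / real n) \<le> ereal (1 / real n)"
      by (simp add: divide_right_mono)
  qed
  also have "limsup (\<lambda>n. ereal (1 / real n)) = 0"
    by (rule lim_imp_Limsup) (auto intro!: lim_const_over_n simp: zero_ereal_def)
  finally show ?thesis using ud_nonneg[of "{a}"] by simp
qed


lemma shadow_cover:
  assumes "k \<ge> 2" "length xs = k" "set xs \<subseteq> B" "j < k"
  shows "f xs \<in> img_pow (k-1) (shadow k f (Transposition.transpose 0 j) [xs!j]) B"
proof -
  define \<pi> where "\<pi> = Transposition.transpose (0::nat) j"
  define zs where "zs = map (\<lambda>t. xs ! \<pi> t) [0..<k]"
  have pk: "\<And>t. t < k \<Longrightarrow> \<pi> t < k" using assms by (auto simp: \<pi>_def Transposition.transpose_def)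
  have pp: "\<And>t. \<pi> (\<pi> t) = t" by (simp add: \<pi>_def)
  have lz: "length zs = k" by (simp add: zs_def)
  have z0: "zs ! 0 = xs ! j" using assms by (simp add: zs_def \<pi>_def nth_map_upt)
  have zeq: "xs ! j # tl zs = zs" using lz z0 assms
    by (metis One_nat_def hd_conv_nth le_add_diff_inverse list.collapse list.size(3) not_one_le_zero numeral_2_eq_2 plus_1_eq_Suc Suc_leD)
  have setz: "set zs \<subseteq> B" using assms pk by (auto simp: zs_def)
  have "map (\<lambda>t. (xs ! j # tl zs) ! \<pi> t) [0..<k] = xs"
  proof (rule nth_equalityI)
    fix t assume "t < length (map (\<lambda>t. (xs ! j # tl zs) ! \<pi> t) [0..<k])"
    hence t: "t < k" by simp
    have "zs ! \<pi> t = xs ! t" using pk[OF t] pp by (simp add: zs_def)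
    thus "map (\<lambda>t. (xs ! j # tl zs) ! \<pi> t) [0..<k] ! t = xs ! t" using t by (simp add: zeq)
  qed (simp add: assms)
  hence "f xs = shadow k f \<pi> [xs!j] (tl zs)"
    by (simp add: shadow_def permute_args_def)
  moreover have "length (tl zs) = k - 1" "set (tl zs) \<subseteq> B"
    using lz setz by (cases zs, auto)+
  ultimately show ?thesis unfolding img_pow_def \<pi>_def by blast
qed

theorem mainTheorem4:
  fixes k :: nat and f :: "nat list \<Rightarrow> nat" and B :: "nat set"
  assumes "k \<ge> 1"
    and "minimal_fun k f"
    and "upper_density B = 0"
    and "upper_density (img_pow k f B) > 0"
  shows "\<forall>i::nat. upper_density (B - {0..i}) = 0
          \<and> upper_density (img_pow k f (B - {0..i})) > 0
          \<and> upper_density (img_pow k f (B - {0..i})) = upper_density (img_pow k f B)"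
proof
  fix i :: nat
  define B' where "B' = B - {0..i}"
  have d1: "upper_density B' = 0"
    using ud_mono[of B' B] ud_nonneg[of B'] assms(3) by (auto simp: B'_def)
  have sub1: "img_pow k f B' \<subseteq> img_pow k f B"
    by (auto simp: img_pow_def B'_def)
  obtain S where S0: "upper_density S = 0" and Ssub: "img_pow k f B \<subseteq> img_pow k f B' \<union> S"
  proof (cases "k = 1")
    case True
    let ?S = "\<Union>a\<in>{0..i}. {f [a]}"
    have "upper_density ?S = 0" by (rule ud_Union0) (auto simp: ud_single)
    moreover have "img_pow k f B \<subseteq> img_pow k f B' \<union> ?S"
    proof
      fix y assume "y \<in> img_pow k f B"
      then obtain xs where xs: "y = f xs" "length xs = 1" "set xs \<subseteq> B"
        using True by (auto simp: img_pow_def)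
      then obtain a where a: "xs = [a]" by (metis length_0_conv length_Suc_conv One_nat_def)
      show "y \<in> img_pow k f B' \<union> ?S"
      proof (cases "a \<le> i")
        case True thus ?thesis using xs a by auto
      next
        case False thus ?thesis using xs a \<open>k = 1\<close> by (auto simp: img_pow_def B'_def)
      qed
    qed
    ultimately show ?thesis using that by blast
  next
    case False
    hence k2: "k \<ge> 2" using assms(1) by auto
    let ?S = "\<Union>p\<in>{0..i} \<times> {..<k}. img_pow (k-1) (shadow k f (Transposition.transpose 0 (snd p)) [fst p]) B"
    have "upper_density ?S = 0"
    proof (rule ud_Union0)
      fix p assume p: "p \<in> {0..i} \<times> {..<k}"
      have "Transposition.transpose 0 (snd p) permutes {..<k}"
        using p assms(1) by (intro permutes_swap_id) auto
      hence "in_C_dzero (k - 1) (shadow k f (Transposition.transpose 0 (snd p)) [fst p])"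
      proof -
        have "\<forall>\<pi> as. \<pi> permutes {..<k} \<and> 0 < length as \<and> length as < k \<longrightarrow>
          in_C_dzero (k - length as) (shadow k f \<pi> as)" using assms(2) unfolding minimal_fun_def by blast
        hence "Transposition.transpose 0 (snd p) permutes {..<k} \<and> 0 < length [fst p] \<and> length [fst p] < k \<longrightarrow>
          in_C_dzero (k - length [fst p]) (shadow k f (Transposition.transpose 0 (snd p)) [fst p])" by blast
        thus ?thesis using \<open>Transposition.transpose 0 (snd p) permutes {..<k}\<close> k2 by simp
      qed
      thus "upper_density (img_pow (k-1) (shadow k f (Transposition.transpose 0 (snd p)) [fst p]) B) = 0"
        using assms(3) unfolding in_C_dzero_def by blast
    qed auto
    moreover have "img_pow k f B \<subseteq> img_pow k f B' \<union> ?S"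
    proof
      fix y assume "y \<in> img_pow k f B"
      then obtain xs where xs: "y = f xs" "length xs = k" "set xs \<subseteq> B"
        by (auto simp: img_pow_def)
      show "y \<in> img_pow k f B' \<union> ?S"
      proof (cases "set xs \<subseteq> B'")
        case True thus ?thesis using xs by (auto simp: img_pow_def)
      next
        case False
        then obtain j where j: "j < k" "xs ! j \<le> i"
          using xs by (auto simp: B'_def in_set_conv_nth)
        have "y \<in> img_pow (k-1) (shadow k f (Transposition.transpose 0 j) [xs!j]) B"
          using shadow_cover[OF k2 xs(2) xs(3) j(1), of f] xs(1) by simp
        moreover have "(xs!j, j) \<in> {0..i} \<times> {..<k}" using j by auto
        ultimately show ?thesis by force
      qed
    qed
    ultimately show ?thesis using that by blast
  qed
  have "upper_density (img_pow k f B) \<le> upper_density (img_pow k f B')"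
    using ud_mono[OF Ssub] ud_union0[OF S0] by simp
  hence eq: "upper_density (img_pow k f B') = upper_density (img_pow k f B)"
    using ud_mono[OF sub1] by simp
  show "upper_density (B - {0..i}) = 0
          \<and> upper_density (img_pow k f (B - {0..i})) > 0
          \<and> upper_density (img_pow k f (B - {0..i})) = upper_density (img_pow k f B)"
    using d1 eq assms(4) unfolding B'_def by simp
qed

end
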